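(* Let $M$ be the $3\times 2$ array of cells (3 columns, 2 rows) whose standard figure $F\subseteq[0,3]\times[0,2]\subseteq\mathbb{R}^2$ is the union of the segment from $(0,0)$ to $(1,1)$ (increasing, bottom cell of column 1), the segment from $(1,1)$ to $(2,2)$ (increasing, top cell of column 2), the segment from $(1,1)$ to $(2,0)$ (decreasing, bottom cell of column 2), and the segment from $(2,2)$ to $(3,1)$ (decreasing, top cell of column 3). Then a permutation is a simple permutation avoiding both $4231$ and $3124$ if and only if it is a simple permutation lying in $\operatorname{Geom}(M)$.
   Context: A permutation $\pi$ avoids $\sigma$ if no subsequence of $\pi$ is order-isomorphic to $\sigma$. An interval of a permutation $\pi$ is a set of contiguous positions $\{a,a+1,\dots,b\}$ whose values $\{\pi(i)\}$ also form a set of contiguous integers; intervals of size $0$, $1$ and $n$ are trivial, and $\pi$ is simple if all its intervals are trivial. For a figure $F\subseteq\mathbb{R}^2$, $\operatorname{Geom}(M)$ is the set of all permutations obtained as follows: choose finitely many points of $F$, no two on a common horizontal or vertical line, label them $1,\dots,n$ from bottom to top, and read the labels from left to right. (In matrix form, with the top row displayed first, $M=\begin{pmatrix}0&1&-1\\1&-1&0\end{pmatrix}$, where $1$ denotes an increasing diagonal segment across the cell, $-1$ a decreasing one, $0$ an empty cell.) *)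

theory Defs
  imports Complex_Main
begin

definition is_perm :: "nat list \<Rightarrow> bool" where
  "is_perm p \<longleftrightarrow> distinct p \<and> set p = {1..length p}"

definition order_iso :: "nat list \<Rightarrow> nat list \<Rightarrow> bool" where
  "order_iso a b \<longleftrightarrow> length a = length b \<and>
     (\<forall>i<length a. \<forall>j<length a. a ! i < a ! j \<longleftrightarrow> b ! i < b ! j)"

definition contains :: "nat list \<Rightarrow> nat list \<Rightarrow> bool" where
  "contains p s \<longleftrightarrow> (\<exists>idx. length idx = length s \<and> sorted_wrt (<) idx \<and>
      (\<forall>k\<in>set idx. k < length p) \<and> order_iso (map (\<lambda>k. p ! k) idx) s)"

definition avoids :: "nat list \<Rightarrow> nat list \<Rightarrow> bool" where
  "avoids p s \<longleftrightarrow> \<not> contains p s"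

definition is_interval :: "nat list \<Rightarrow> nat set \<Rightarrow> bool" where
  "is_interval p I \<longleftrightarrow> (\<exists>a b. a \<le> b \<and> b < length p \<and> I = {a..b} \<and>
      (\<exists>c. (\<lambda>k. p ! k) ` I = {c..c + (b - a)}))"

definition simple_perm :: "nat list \<Rightarrow> bool" where
  "simple_perm p \<longleftrightarrow> (\<forall>I. is_interval p I \<longrightarrow> card I \<le> 1 \<or> card I = length p)"

definition figM :: "(real \<times> real) set" where
  "figM = {(t, t) | t. 0 \<le> t \<and> t \<le> 1}
        \<union> {(t, t) | t. 1 \<le> t \<and> t \<le> 2}
        \<union> {(t, 2 - t) | t. 1 \<le> t \<and> t \<le> 2}
        \<union> {(t, 4 - t) | t. 2 \<le> t \<and> t \<le> 3}"

definition Geom :: "(real \<times> real) set \<Rightarrow> nat list set" where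
  "Geom F = {p. is_perm p \<and> (\<exists>x y :: nat \<Rightarrow> real.
      (\<forall>i<length p. (x i, y i) \<in> F) \<and>
      (\<forall>i<length p. \<forall>j<length p. i < j \<longrightarrow> x i < x j) \<and>
      (\<forall>i<length p. \<forall>j<length p. y i < y j \<longleftrightarrow> p ! i < p ! j))}"

end

theory Submission
  imports Defs
begin


lemma all4s: "(\<forall>a<Suc (Suc (Suc (Suc 0))). P a) \<longleftrightarrow> P 0 \<and> P (Suc 0) \<and> P (Suc (Suc 0)) \<and> P (Suc (Suc (Suc 0)))"
  by (auto simp: less_Suc_eq)

lemma c4231:
  assumes "i<j" "j<k" "k<l" "l<length p" "p!l < p!j" "p!j < p!k" "p!k < p!i"
  shows "contains p [4,2,3,1]"
  unfolding contains_def
  apply (rule exI[of _ "[i,j,k,l]"])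
  using assms by (simp add: order_iso_def all4s)

lemma c3124:
  assumes "i<j" "j<k" "k<l" "l<length p" "p!j < p!k" "p!k < p!i" "p!i < p!l"
  shows "contains p [3,1,2,4]"
  unfolding contains_def
  apply (rule exI[of _ "[i,j,k,l]"])
  using assms by (simp add: order_iso_def all4s)



locale SP =
  fixes p :: "nat list"
  assumes perm: "is_perm p" and simp: "simple_perm p"
    and av1: "avoids p [4,2,3,1]" and av2: "avoids p [3,1,2,4]"
    and ne: "p \<noteq> []"
begin

abbreviation "n \<equiv> length p"
abbreviation "L \<equiv> p ! (length p - 1)"

lemma npos: "0 < n" using ne by simp

lemma nm1[simp]: "x \<le> n - Suc 0 \<Longrightarrow> x < n" using npos by linarith
lemma nm2[simp]: "x < n - Suc 0 \<Longrightarrow> x < n" by linarith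

lemma dist: "i < n \<Longrightarrow> j < n \<Longrightarrow> i \<noteq> j \<Longrightarrow> p!i \<noteq> p!j"
  using perm unfolding is_perm_def by (simp add: nth_eq_iff_index_eq)

lemma rng: "i < n \<Longrightarrow> 1 \<le> p!i \<and> p!i \<le> n"
proof -
  assume "i<n"
  then have "p!i \<in> set p" by simp
  then show ?thesis using perm unfolding is_perm_def by auto
qed

lemma surj: "1 \<le> v \<Longrightarrow> v \<le> n \<Longrightarrow> \<exists>i<n. p!i = v"
proof -
  assume "1 \<le> v" "v \<le> n"
  then have "v \<in> set p" using perm unfolding is_perm_def by auto
  then show ?thesis by (auto simp: in_set_conv_nth)
qed

lemma no4231: "i<j \<Longrightarrow> j<k \<Longrightarrow> k<l \<Longrightarrow> l<n \<Longrightarrow> p!l<p!j \<Longrightarrow> p!j<p!k \<Longrightarrow> p!k<p!i \<Longrightarrow> False"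
  using av1 c4231 unfolding avoids_def by blast

lemma no3124: "i<j \<Longrightarrow> j<k \<Longrightarrow> k<l \<Longrightarrow> l<n \<Longrightarrow> p!j<p!k \<Longrightarrow> p!k<p!i \<Longrightarrow> p!i<p!l \<Longrightarrow> False"
  using av2 c3124 unfolding avoids_def by blast

lemma seg_false:
  assumes ab: "a < b" "b < n" "a \<noteq> 0 \<or> b \<noteq> n - 1"
    and el: "el \<in> {a..b}" and eh: "eh \<in> {a..b}"
    and bnd: "\<forall>k\<in>{a..b}. p!el \<le> p!k \<and> p!k \<le> p!eh"
    and cl: "\<forall>k<n. k \<notin> {a..b} \<longrightarrow> p!k < p!el \<or> p!eh < p!k"
  shows False
proof -
  let ?f = "\<lambda>k. p!k"
  have img: "?f ` {a..b} = {p!el..p!eh}"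
  proof
    show "?f ` {a..b} \<subseteq> {p!el..p!eh}" using bnd by auto
    show "{p!el..p!eh} \<subseteq> ?f ` {a..b}"
    proof
      fix v assume v: "v \<in> {p!el..p!eh}"
      have "1 \<le> p!el" "p!eh \<le> n" using rng el eh ab by auto
      then have "1 \<le> v" "v \<le> n" using v by auto
      then obtain i where i: "i<n" "p!i = v" using surj by blast
      then have "i \<in> {a..b}" using cl v by fastforce
      then show "v \<in> ?f ` {a..b}" using i by auto
    qed
  qed
  have inj: "inj_on ?f {a..b}" unfolding inj_on_def
  proof (intro ballI impI)
    fix x y assume "x \<in> {a..b}" "y \<in> {a..b}" "p!x = p!y"
    then show "x = y" using dist[of x y] ab by auto
  qed
  have "card (?f ` {a..b}) = b + 1 - a" using card_image[OF inj] by simp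
  then have cd: "card {p!el..p!eh} = b + 1 - a" using img by simp
  have "is_interval p {a..b}"
    unfolding is_interval_def
    apply (rule exI[of _ a], rule exI[of _ b])
    using ab img cd by (auto intro!: exI[of _ "p!el"])
  then have "card {a..b} \<le> 1 \<or> card {a..b} = n" using simp unfolding simple_perm_def by blast
  then show False using ab by auto
qed

lemma seg_min: "a \<le> b \<Longrightarrow> \<exists>e\<in>{a..b}. \<forall>k\<in>{a..b}. p!e \<le> p!k"
proof -
  assume "a \<le> b"
  let ?V = "(\<lambda>k. p!k) ` {a..b}"
  have "Min ?V \<in> ?V" using \<open>a\<le>b\<close> by (intro Min_in) auto
  then obtain e where "e \<in> {a..b}" "p!e = Min ?V" by auto
  then show ?thesis by (metis Min_le finite_atLeastAtMost finite_imageI imageI)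
qed

lemma seg_max: "a \<le> b \<Longrightarrow> \<exists>e\<in>{a..b}. \<forall>k\<in>{a..b}. p!k \<le> p!e"
proof -
  assume "a \<le> b"
  let ?V = "(\<lambda>k. p!k) ` {a..b}"
  have "Max ?V \<in> ?V" using \<open>a\<le>b\<close> by (intro Max_in) auto
  then obtain e where "e \<in> {a..b}" "p!e = Max ?V" by auto
  then show ?thesis by (metis Max_ge finite_atLeastAtMost finite_imageI imageI)
qed

end



context SP begin

lemma dist': "i < n \<Longrightarrow> j < n \<Longrightarrow> p!i = p!j \<Longrightarrow> i = j"
  using dist by blast

lemma noP1:
  assumes "i0<j0" "j0<k0" "k0<n-1" "p!j0 < p!k0" "p!k0 < L" "L < p!i0"
  shows False
proof -
  define Occ where "Occ k \<longleftrightarrow> (\<exists>i j. i<j \<and> j<k \<and> k<n-1 \<and> p!j<p!k \<and> p!k<L \<and> L<p!i)" for k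
  have O0: "Occ k0" unfolding Occ_def using assms by blast
  let ?K = "{k. Occ k}"
  have finK: "finite ?K" by (rule finite_subset[of _ "{..<n}"]) (auto simp: Occ_def)
  let ?V = "(\<lambda>k. p!k) ` ?K"
  have "Max ?V \<in> ?V" using O0 finK by (intro Max_in) auto
  then obtain k where Ok: "Occ k" and km: "p!k = Max ?V" by auto
  have kmax: "Occ k' \<Longrightarrow> p!k' \<le> p!k" for k' using finK km by (simp add: Max_ge)
  from Ok obtain i j where ij: "i<j" "j<k" "k<n-1" "p!j<p!k" "p!k<L" "L<p!i"
    unfolding Occ_def by blast
  have a: "p!j < p!q \<and> p!q < p!k" if q: "k<q" "q<n-1" "p!q<L" for q
  proof -
    have "p!q \<noteq> p!j" "p!q \<noteq> p!k" using dist q ij by auto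
    moreover have "\<not> p!q < p!j" using no4231[of i j k q] q ij by (auto; arith)
    moreover have "\<not> p!k < p!q"
    proof
      assume "p!k < p!q"
      then have "Occ q" unfolding Occ_def using q ij by (intro exI[of _ i] exI[of _ j]) auto
      then show False using kmax \<open>p!k < p!q\<close> by fastforce
    qed
    ultimately show ?thesis by auto
  qed
  have b: "p!q < p!i" if q: "k<q" "q<n-1" "L<p!q" for q
  proof -
    have "p!q \<noteq> p!i" using dist q ij by auto
    moreover have "\<not> p!i < p!q" using no3124[of i j k q] q ij by (auto; arith)
    ultimately show ?thesis by auto
  qed
  have kn: "k \<le> n-1" using ij by auto
  obtain el where el: "el \<in> {k..n-1}" "\<forall>q\<in>{k..n-1}. p!el \<le> p!q" using seg_min[OF kn] by blast
  obtain eh where eh: "eh \<in> {k..n-1}" "\<forall>q\<in>{k..n-1}. p!q \<le> p!eh" using seg_max[OF kn] by blast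
  have cl: "\<forall>d<n. d \<notin> {k..n-1} \<longrightarrow> p!d < p!el \<or> p!eh < p!d"
  proof (intro allI impI)
    fix d assume d: "d<n" "d \<notin> {k..n-1}"
    then have dk: "d < k" by auto
    show "p!d < p!el \<or> p!eh < p!d"
    proof (rule ccontr)
      assume "\<not> (p!d < p!el \<or> p!eh < p!d)"
      then have lo: "p!el \<le> p!d" and hi: "p!d \<le> p!eh" by auto
      have dL: "p!d \<noteq> L" using dist[of d "n-1"] dk ij by auto
      show False
      proof (cases "p!d < L")
        case True
        have "p!d \<noteq> p!k" using dist[of d k] dk ij by auto
        then consider "p!k < p!d" | "p!d < p!k" by linarith
        then show False
        proof cases
          case 1
          consider "d<j" | "d=j" | "j<d" by linarith
          then show False
          proof cases
            case 1 then show False using no3124[of d j k "n-1"] ij \<open>p!k < p!d\<close> True by (auto; arith)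
          next
            case 2 then show False using ij \<open>p!k < p!d\<close> by auto
          next
            case 3
            then have "Occ d" unfolding Occ_def using ij dk True \<open>p!k < p!d\<close>
              by (intro exI[of _ i] exI[of _ j]) auto
            then show False using kmax \<open>p!k < p!d\<close> by fastforce
          qed
        next
          case 2
          have "p!el \<noteq> p!d" using dist[of el d] el d by auto
          then have eld: "p!el < p!d" using lo by auto
          have "el \<noteq> n-1" using eld True by auto
          moreover have "el \<noteq> k" using eld \<open>p!d < p!k\<close> by auto
          ultimately have elr: "k<el" "el<n-1" using el by auto
          have elL: "p!el < L" using eld True by auto
          have je: "p!j < p!el" using a[OF elr elL] by auto
          consider "d<j" | "d=j" | "j<d" by linarith
          then show False
          proof cases
            case 1 then show False using no3124[of d j el "n-1"] ij elr je eld True by (auto; arith)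
          next
            case 2 then show False using je eld by auto
          next
            case 3 then show False using no4231[of i d k el] ij elr eld \<open>p!d < p!k\<close> dk by (auto; arith)
          qed
        qed
      next
        case False
        then have Ld: "L < p!d" using dL by auto
        have "p!eh \<noteq> p!d" using dist[of eh d] eh d by auto
        then have ehd: "p!d < p!eh" using hi by auto
        have "eh \<noteq> n-1" using ehd Ld by auto
        moreover have "eh \<noteq> k" using ehd Ld ij by auto
        ultimately have ehr: "k<eh" "eh<n-1" using eh by auto
        have ehi: "p!eh < p!i" using b[OF ehr] ehd Ld by auto
        consider "d<j" | "d=j" | "j<d" by linarith
        then show False
        proof cases
          case 1 then show False using no3124[of d j k eh] ij ehr Ld ehd by (auto; arith)
        next
          case 2 then show False using Ld ij by auto
        next
          case 3 then show False using no4231[of i d eh "n-1"] ij ehr Ld ehd ehi dk by (auto; arith)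
        qed
      qed
    qed
  qed
  show False
    using seg_false[of k "n-1" el eh] ij el eh cl by auto
qed

end



context SP begin

lemma top_tail:
  assumes ij: "i<j" "j<n-1" "L<p!j" "p!j<p!i"
    and el: "el \<in> {i..j}" "\<forall>q\<in>{i..j}. p!el \<le> p!q"
    and eh: "eh \<in> {i..j}" "\<forall>q\<in>{i..j}. p!q \<le> p!eh"
    and allT: "\<forall>d\<in>{i..j}. L < p!d"
    and q: "j<q" "q<n-1" "L<p!q"
  shows "p!q < p!el \<or> p!eh < p!q"
proof (rule ccontr)
  assume "\<not> ?thesis"
  then have lo: "p!el \<le> p!q" and hi: "p!q \<le> p!eh" by auto
  have "p!q \<noteq> p!el" "p!q \<noteq> p!eh" "p!q \<noteq> p!i" "p!q \<noteq> p!j"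
    using dist[of q el] dist[of q eh] dist[of q i] dist[of q j] q el eh ij by auto
  then have lo': "p!el < p!q" and hi': "p!q < p!eh" using lo hi by auto
  consider "p!j < p!q \<and> p!q < p!i" | "p!q < p!j" | "p!i < p!q"
    using \<open>p!q \<noteq> p!i\<close> \<open>p!q \<noteq> p!j\<close> by linarith
  then show False
  proof cases
    case 1 then show False using no4231[of i j q "n-1"] ij q by (auto; arith)
  next
    case 2
    have "el \<noteq> j" "el \<noteq> i" using 2 lo' ij by auto
    then have "i<el" "el<j" using el by auto
    moreover have "L < p!el" using allT el by auto
    ultimately show False using no4231[of i el q "n-1"] ij q lo' 2 by (auto; arith)
  next
    case 3
    have "eh \<noteq> j" "eh \<noteq> i" using 3 hi' ij by auto
    then have "i<eh" "eh<j" using eh by auto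
    then show False using no4231[of eh j q "n-1"] ij q hi' 3 by (auto; arith)
  qed
qed

lemma noP2:
  assumes "i0<j0" "j0<k0" "k0<n-1" "p!j0 < p!i0" "p!i0 < p!k0" "p!k0 < L"
  shows False
proof -
  define Occ where "Occ i \<longleftrightarrow> (\<exists>j k. i<j \<and> j<k \<and> k<n-1 \<and> p!j<p!i \<and> p!i<p!k \<and> p!k<L)" for i
  have O0: "Occ i0" unfolding Occ_def using assms by blast
  define i where "i = (LEAST i. Occ i)"
  have Oi: "Occ i" unfolding i_def using O0 by (rule LeastI)
  have imin: "\<not> Occ u" if "u < i" for u using that not_less_Least i_def by blast
  from Oi obtain j k where ij: "i<j" "j<k" "k<n-1" "p!j<p!i" "p!i<p!k" "p!k<L"
    unfolding Occ_def by blast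
  have f1: "p!u < L" if "u < j" for u
  proof (rule ccontr)
    assume "\<not> p!u < L"
    moreover have "p!u \<noteq> L" using dist[of u "n-1"] that ij by auto
    ultimately have "L < p!u" by auto
    then show False using noP1[of u j k] that ij by auto
  qed
  have f2: "p!u < p!j" if "u < i" for u
  proof (rule ccontr)
    assume "\<not> p!u < p!j"
    moreover have "p!u \<noteq> p!j" "p!u \<noteq> p!k" using dist[of u j] dist[of u k] that ij by auto
    ultimately have uj: "p!j < p!u" by auto
    have uL: "p!u < L" using f1[of u] that ij by auto
    show False
    proof (cases "p!u < p!k")
      case True
      then have "Occ u" unfolding Occ_def using that ij uj uL
        by (intro exI[of _ j] exI[of _ k]) auto
      then show False using imin that by auto
    next
      case False
      then show False using no3124[of u j k "n-1"] that ij uj uL \<open>p!u \<noteq> p!k\<close> by (auto; arith)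
    qed
  qed
  have f3: "p!d < p!k" if "d \<in> {i..j}" for d
  proof (cases "d = j")
    case True then show ?thesis using ij by auto
  next
    case False
    then have dj: "d < j" using that by auto
    show ?thesis
    proof (rule ccontr)
      assume "\<not> p!d < p!k"
      moreover have "p!d \<noteq> p!k" using dist[of d k] dj ij by auto
      ultimately have "p!k < p!d" by auto
      then show False using no3124[of d j k "n-1"] dj ij f1[OF dj] by (auto; arith)
    qed
  qed
  have f4: "p!u < p!d" if "u < i" "d \<in> {i..j}" for u d
  proof (rule ccontr)
    assume "\<not> p!u < p!d"
    moreover have "p!u \<noteq> p!d" using dist[of u d] that ij by auto
    ultimately have "p!d < p!u" by auto
    moreover have "p!u < p!k" using f2[OF that(1)] ij by auto
    ultimately have "Occ u" unfolding Occ_def using that ij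
      by (intro exI[of _ d] exI[of _ k]) auto
    then show False using imin that by auto
  qed
  have ijl: "i \<le> j" using ij by auto
  obtain el where el: "el \<in> {i..j}" "\<forall>q\<in>{i..j}. p!el \<le> p!q" using seg_min[OF ijl] by blast
  obtain eh where eh: "eh \<in> {i..j}" "\<forall>q\<in>{i..j}. p!q \<le> p!eh" using seg_max[OF ijl] by blast
  have f5: "p!q < p!el \<or> p!eh < p!q" if q: "j<q" "q<n-1" "p!q<L" for q
  proof (rule ccontr)
    assume "\<not> ?thesis"
    then have lo: "p!el \<le> p!q" and hi: "p!q \<le> p!eh" by auto
    have "p!q \<noteq> p!el" "p!q \<noteq> p!eh" "p!q \<noteq> p!i" "p!q \<noteq> p!j"
      using dist[of q el] dist[of q eh] dist[of q i] dist[of q j] q el eh ij by auto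
    then have lo': "p!el < p!q" and hi': "p!q < p!eh" using lo hi by auto
    consider "p!j < p!q \<and> p!q < p!i" | "p!q < p!j" | "p!i < p!q"
      using \<open>p!q \<noteq> p!i\<close> \<open>p!q \<noteq> p!j\<close> by linarith
    then show False
    proof cases
      case 1 then show False using no3124[of i j q "n-1"] ij q by (auto; arith)
    next
      case 2
      have "el \<noteq> j" "el \<noteq> i" using 2 lo' ij by auto
      then have "i<el" "el<j" using el by auto
      then show False using no3124[of i el q "n-1"] ij q lo' 2 by (auto; arith)
    next
      case 3
      have "eh \<noteq> j" "eh \<noteq> i" using 3 hi' ij by auto
      then have ehr: "i<eh" "eh<j" using eh by auto
      then show False using no3124[of eh j q "n-1"] ij q hi' 3 f1[of eh] by (auto; arith)
    qed
  qed
  have hiL: "p!eh < L" using f3[of eh] eh ij by auto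
  have cl: "\<forall>d<n. d \<notin> {i..j} \<longrightarrow> p!d < p!el \<or> p!eh < p!d"
  proof (intro allI impI)
    fix d assume d: "d<n" "d \<notin> {i..j}"
    then consider "d < i" | "j < d" by auto
    then show "p!d < p!el \<or> p!eh < p!d"
    proof cases
      case 1 then show ?thesis using f4[of d el] el by auto
    next
      case 2
      show ?thesis
      proof (cases "p!d < L")
        case True
        then have "d \<noteq> n-1" by auto
        then show ?thesis using f5[of d] 2 d True by auto
      next
        case False then show ?thesis using hiL by auto
      qed
    qed
  qed
  show False using seg_false[of i j el eh] ij el eh cl by (auto; arith)
qed

end



context SP begin

lemma noP3:
  assumes "i0<j0" "j0<k0" "k0<n-1" "L < p!j0" "p!j0 < p!i0" "p!k0 < L"
  shows False
proof -
  define Occ where "Occ i \<longleftrightarrow> (\<exists>j k. i<j \<and> j<k \<and> k<n-1 \<and> L<p!j \<and> p!j<p!i \<and> p!k<L)" for i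
  have O0: "Occ i0" unfolding Occ_def using assms by blast
  define i where "i = (LEAST i. Occ i)"
  have Oi: "Occ i" unfolding i_def using O0 by (rule LeastI)
  have imin: "\<not> Occ u" if "u < i" for u using that not_less_Least i_def by blast
  from Oi obtain j k where ij: "i<j" "j<k" "k<n-1" "L<p!j" "p!j<p!i" "p!k<L"
    unfolding Occ_def by blast
  have f1: "L < p!d" if "d \<in> {i..j}" for d
  proof (rule ccontr)
    assume "\<not> L < p!d"
    moreover have "p!d \<noteq> L" using dist[of d "n-1"] that ij by auto
    ultimately have dL: "p!d < L" by auto
    have "d \<noteq> i" "d \<noteq> j" using dL ij by auto
    then have dr: "i<d" "d<j" using that by auto
    have "p!d \<noteq> p!k" using dist[of d k] dr ij by auto
    then consider "p!d < p!k" | "p!k < p!d" by linarith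
    then show False
    proof cases
      case 1 then show False using noP1[of i d k] dr ij by auto
    next
      case 2 then show False using no4231[of i d j k] dr ij dL by (auto; arith)
    qed
  qed
  have f2: "p!u < p!j" if "u < i" "L < p!u" for u
  proof (rule ccontr)
    assume "\<not> p!u < p!j"
    moreover have "p!u \<noteq> p!j" using dist[of u j] that ij by auto
    ultimately have "p!j < p!u" by auto
    then have "Occ u" unfolding Occ_def using that ij
      by (intro exI[of _ j] exI[of _ k]) auto
    then show False using imin that by auto
  qed
  have ijl: "i \<le> j" using ij by auto
  obtain el where el: "el \<in> {i..j}" "\<forall>q\<in>{i..j}. p!el \<le> p!q" using seg_min[OF ijl] by blast
  obtain eh where eh: "eh \<in> {i..j}" "\<forall>q\<in>{i..j}. p!q \<le> p!eh" using seg_max[OF ijl] by blast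
  have f4: "p!u < p!el" if "u < i" for u
  proof (cases "p!u < L")
    case True then show ?thesis using f1[of el] el by auto
  next
    case False
    moreover have "p!u \<noteq> L" using dist[of u "n-1"] that ij by auto
    ultimately have uL: "L < p!u" by auto
    show ?thesis
    proof (rule ccontr)
      assume "\<not> p!u < p!el"
      moreover have "p!u \<noteq> p!el" using dist[of u el] that el ij by (auto; arith)
      ultimately have elu: "p!el < p!u" by auto
      have uj: "p!u < p!j" using f2 that uL by auto
      have "el \<noteq> j" "el \<noteq> i" using elu uj ij by auto
      then have elr: "i<el" "el<j" using el by auto
      have "Occ u" unfolding Occ_def using that ij elr elu f1[of el] el
        by (intro exI[of _ el] exI[of _ k]) auto
      then show False using imin that by auto
    qed
  qed
  have cl: "\<forall>d<n. d \<notin> {i..j} \<longrightarrow> p!d < p!el \<or> p!eh < p!d"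
  proof (intro allI impI)
    fix d assume d: "d<n" "d \<notin> {i..j}"
    then consider "d < i" | "j < d" by auto
    then show "p!d < p!el \<or> p!eh < p!d"
    proof cases
      case 1 then show ?thesis using f4 by auto
    next
      case 2
      show ?thesis
      proof (cases "L < p!d")
        case True
        then have "d \<noteq> n-1" by auto
        then have "d < n-1" using d by auto
        then show ?thesis using top_tail[of i j el eh d] 2 True ij el eh f1 by auto
      next
        case False then show ?thesis using f1[of el] el by auto
      qed
    qed
  qed
  show False using seg_false[of i j el eh] ij el eh cl by (auto; arith)
qed

lemma noP4:
  assumes "i0<j0" "j0<k0" "k0<n-1" "L < p!j0" "p!j0 < p!i0" "p!i0 < p!k0"
  shows False
proof -
  define Occ where "Occ i \<longleftrightarrow> (\<exists>j k. i<j \<and> j<k \<and> k<n-1 \<and> L<p!j \<and> p!j<p!i \<and> p!i<p!k)" for i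
  have O0: "Occ i0" unfolding Occ_def using assms by blast
  define i where "i = (LEAST i. Occ i)"
  have Oi: "Occ i" unfolding i_def using O0 by (rule LeastI)
  have imin: "\<not> Occ u" if "u < i" for u using that not_less_Least i_def by blast
  from Oi obtain j k where ij: "i<j" "j<k" "k<n-1" "L<p!j" "p!j<p!i" "p!i<p!k"
    unfolding Occ_def by blast
  have f1: "L < p!d" if "d \<in> {i..j}" for d
  proof (rule ccontr)
    assume "\<not> L < p!d"
    moreover have "p!d \<noteq> L" using dist[of d "n-1"] that ij by auto
    ultimately have dL: "p!d < L" by auto
    have "d \<noteq> i" "d \<noteq> j" using dL ij by auto
    then have dr: "i<d" "d<j" using that by auto
    show False using no3124[of i d j k] dr ij dL by (auto; arith)
  qed
  have f2: "p!u < p!j" if "u < i" "L < p!u" for u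
  proof (rule ccontr)
    assume "\<not> p!u < p!j"
    moreover have "p!u \<noteq> p!j" "p!u \<noteq> p!k" using dist[of u j] dist[of u k] that ij by auto
    ultimately have uj: "p!j < p!u" by auto
    show False
    proof (cases "p!u < p!k")
      case True
      then have "Occ u" unfolding Occ_def using that ij uj
        by (intro exI[of _ j] exI[of _ k]) auto
      then show False using imin that by auto
    next
      case False
      then show False using no4231[of u j k "n-1"] that ij uj \<open>p!u \<noteq> p!k\<close> by (auto; arith)
    qed
  qed
  have ijl: "i \<le> j" using ij by auto
  obtain el where el: "el \<in> {i..j}" "\<forall>q\<in>{i..j}. p!el \<le> p!q" using seg_min[OF ijl] by blast
  obtain eh where eh: "eh \<in> {i..j}" "\<forall>q\<in>{i..j}. p!q \<le> p!eh" using seg_max[OF ijl] by blast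
  have f4: "p!u < p!el" if "u < i" for u
  proof (cases "p!u < L")
    case True then show ?thesis using f1[of el] el by auto
  next
    case False
    moreover have "p!u \<noteq> L" using dist[of u "n-1"] that ij by auto
    ultimately have uL: "L < p!u" by auto
    show ?thesis
    proof (rule ccontr)
      assume "\<not> p!u < p!el"
      moreover have "p!u \<noteq> p!el" using dist[of u el] that el ij by (auto; arith)
      ultimately have elu: "p!el < p!u" by auto
      have uj: "p!u < p!j" using f2 that uL by auto
      have "el \<noteq> j" "el \<noteq> i" using elu uj ij by auto
      then have elr: "i<el" "el<j" using el by auto
      have "Occ u" unfolding Occ_def using that ij elr elu f1[of el] el uj
        by (intro exI[of _ el] exI[of _ k]) auto
      then show False using imin that by auto
    qed
  qed
  have cl: "\<forall>d<n. d \<notin> {i..j} \<longrightarrow> p!d < p!el \<or> p!eh < p!d"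
  proof (intro allI impI)
    fix d assume d: "d<n" "d \<notin> {i..j}"
    then consider "d < i" | "j < d" by auto
    then show "p!d < p!el \<or> p!eh < p!d"
    proof cases
      case 1 then show ?thesis using f4 by auto
    next
      case 2
      show ?thesis
      proof (cases "L < p!d")
        case True
        then have "d \<noteq> n-1" by auto
        then have "d < n-1" using d by auto
        then show ?thesis using top_tail[of i j el eh d] 2 True ij el eh f1 by auto
      next
        case False then show ?thesis using f1[of el] el by auto
      qed
    qed
  qed
  show False using seg_false[of i j el eh] ij el eh cl by (auto; arith)
qed

end



lemma construct:
  fixes p :: "nat list" and c1 c2 L :: nat
  assumes perm: "is_perm p"
  assumes c12: "c1 \<le> c2" "c2 \<le> length p"
   and A1: "\<forall>q<c1. p!q < L" and A2: "\<forall>q r. q<r \<and> r<c1 \<longrightarrow> p!q < p!r"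
   and C1: "\<forall>q. c2 \<le> q \<and> q<length p \<longrightarrow> L \<le> p!q"
   and C2: "\<forall>q r. c2 \<le> q \<and> q<r \<and> r<length p \<longrightarrow> p!r < p!q"
   and M1: "\<forall>q r. c1 \<le> q \<and> q<r \<and> r<c2 \<and> L \<le> p!q \<and> L \<le> p!r \<longrightarrow> p!q < p!r"
   and M2: "\<forall>q r. c1 \<le> q \<and> q<r \<and> r<c2 \<and> p!q < L \<and> p!r < L \<longrightarrow> p!r < p!q"
  shows "p \<in> Geom figM"
proof -
  define n where "n = length p"
  have rng: "1 \<le> p!i \<and> p!i \<le> n" if "i < n" for i
  proof -
    have "p!i \<in> set p" using that n_def by simp
    then show ?thesis using perm unfolding is_perm_def n_def by auto
  qed
  define N where "N = real n + 1"
  have Npos: "N > 0" unfolding N_def by simp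
  define ST where "ST v = {Suc q | q. c1 \<le> q \<and> q < c2 \<and> L \<le> p!q \<and> p!q \<le> v}" for v
  define SB where "SB v = {Suc q | q. c1 \<le> q \<and> q < c2 \<and> p!q < L \<and> v \<le> p!q}" for v
  define wT where "wT v = Max (insert 0 (ST v))" for v
  define wB where "wB v = Max (insert 0 (SB v))" for v
  have finST: "finite (ST v)" for v
    by (rule finite_subset[of _ "Suc ` {..<c2}"]) (auto simp: ST_def)
  have finSB: "finite (SB v)" for v
    by (rule finite_subset[of _ "Suc ` {..<c2}"]) (auto simp: SB_def)
  have wTle: "wT v \<le> n" for v
    unfolding wT_def using finST c12 by (auto simp: ST_def n_def)
  have wBle: "wB v \<le> n" for v
    unfolding wB_def using finSB c12 by (auto simp: SB_def n_def)
  have wTmono: "wT v \<le> wT v'" if "v \<le> v'" for v v'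
    unfolding wT_def using that finST by (intro Max_mono) (auto simp: ST_def)
  have wBmono: "wB v' \<le> wB v" if "v \<le> v'" for v v'
    unfolding wB_def using that finSB by (intro Max_mono) (auto simp: SB_def)
  define hh where "hh v = (if L \<le> v then (N * real (wT v) + real v) / (N*N)
                           else (N * real (wB v) + (N - real v)) / (N*N))" for v
  define g where "g v = (if L \<le> v then 1 + hh v else 1 - hh v)" for v
  have hb: "0 < hh v \<and> hh v < 1" if "1 \<le> v" "v \<le> n" for v
  proof (cases "L \<le> v")
    case True
    have w: "real (wT v) \<le> real n" using wTle by simp
    have "N * real (wT v) \<le> N * real n" using w Npos by (simp add: mult_left_mono)
    then have "N * real (wT v) + real v \<le> N * real n + real n"
      using that by simp
    also have "\<dots> < N * N" unfolding N_def by (simp add: algebra_simps)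
    finally have "N * real (wT v) + real v < N*N" .
    moreover have "0 \<le> N * real (wT v)" using Npos by simp
    then have "0 < N * real (wT v) + real v" using that by linarith
    ultimately show ?thesis using True Npos unfolding hh_def by (simp add: divide_simps)
  next
    case False
    have w: "real (wB v) \<le> real n" using wBle by simp
    have "N * real (wB v) \<le> N * real n" using w Npos by (simp add: mult_left_mono)
    moreover have "real v \<ge> 1" using that by simp
    ultimately have "N * real (wB v) + (N - real v) \<le> N * real n + real n"
      using N_def by linarith
    also have "\<dots> < N * N" unfolding N_def by (simp add: algebra_simps)
    finally have "N * real (wB v) + (N - real v) < N*N" .
    moreover have "0 \<le> N * real (wB v)" using Npos by simp
    then have "0 < N * real (wB v) + (N - real v)" using that unfolding N_def by linarith
    ultimately show ?thesis using False Npos unfolding hh_def by (simp add: divide_simps)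
  qed
  have gmono: "g v < g v'" if "1 \<le> v" "v < v'" "v' \<le> n" for v v'
  proof -
    have hv: "0 < hh v \<and> hh v < 1" "0 < hh v' \<and> hh v' < 1" using hb that by auto
    consider "L \<le> v" | "v < L \<and> L \<le> v'" | "v' < L" using that by linarith
    then show ?thesis
    proof cases
      case 1
      then have "L \<le> v'" using that by simp
      have "real (wT v) \<le> real (wT v')" using wTmono[of v v'] that by simp
      then have "N * real (wT v) + real v < N * real (wT v') + real v'"
        using that Npos by (smt (verit) mult_left_mono of_nat_less_iff)
      then show ?thesis using 1 \<open>L \<le> v'\<close> Npos unfolding g_def hh_def by (simp add: divide_strict_right_mono)
    next
      case 2 then show ?thesis using hv unfolding g_def by auto
    next
      case 3
      then have "v < L" using that by simp
      have "real (wB v') \<le> real (wB v)" using wBmono[of v v'] that by simp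
      then have "N * real (wB v') + (N - real v') < N * real (wB v) + (N - real v)"
        using that Npos by (smt (verit) mult_left_mono of_nat_less_iff)
      then show ?thesis using 3 \<open>v < L\<close> Npos unfolding g_def hh_def by (simp add: divide_strict_right_mono)
    qed
  qed
  have mid: "N * real (Suc q) < hh (p!q) * (N*N) \<and> hh (p!q) * (N*N) < N * real (Suc q) + N"
    if q: "c1 \<le> q" "q < c2" for q
  proof -
    have qn: "q < n" using q c12 n_def by simp
    have v: "1 \<le> p!q" "p!q \<le> n" using rng[OF qn] by auto
    show ?thesis
    proof (cases "L \<le> p!q")
      case True
      have "wT (p!q) = Suc q" unfolding wT_def
      proof (rule Max_eqI)
        show "finite (insert 0 (ST (p!q)))" using finST by simp
        show "Suc q \<in> insert 0 (ST (p!q))" using q True by (auto simp: ST_def)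
        fix y assume "y \<in> insert 0 (ST (p!q))"
        then show "y \<le> Suc q"
        proof
          assume "y \<in> ST (p!q)"
          then obtain q' where q': "y = Suc q'" "c1 \<le> q'" "q' < c2" "L \<le> p!q'" "p!q' \<le> p!q"
            unfolding ST_def by blast
          have "\<not> q < q'" using M1 q q' True by force
          then show ?thesis using q' by simp
        qed simp
      qed
      then have "hh (p!q) * (N*N) = N * real (Suc q) + real (p!q)"
        unfolding hh_def using True Npos by simp
      then show ?thesis using v unfolding N_def by simp
    next
      case False
      have "wB (p!q) = Suc q" unfolding wB_def
      proof (rule Max_eqI)
        show "finite (insert 0 (SB (p!q)))" using finSB by simp
        show "Suc q \<in> insert 0 (SB (p!q))" using q False by (auto simp: SB_def)
        fix y assume "y \<in> insert 0 (SB (p!q))"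
        then show "y \<le> Suc q"
        proof
          assume "y \<in> SB (p!q)"
          then obtain q' where q': "y = Suc q'" "c1 \<le> q'" "q' < c2" "p!q' < L" "p!q \<le> p!q'"
            unfolding SB_def by blast
          have "\<not> q < q'" using M2 q q' False by force
          then show ?thesis using q' by simp
        qed simp
      qed
      then have "hh (p!q) * (N*N) = N * real (Suc q) + (N - real (p!q))"
        unfolding hh_def using False Npos by simp
      then show ?thesis using v unfolding N_def by simp
    qed
  qed
  have midlt: "hh (p!q) < hh (p!r)" if "c1 \<le> q" "q < r" "r < c2" for q r
  proof -
    have a: "hh (p!q) * (N*N) < N * real (Suc q) + N" using mid[of q] that by simp
    have b: "N * real (Suc r) < hh (p!r) * (N*N)" using mid[of r] that by simp
    have "real (Suc q) + 1 \<le> real (Suc r)" using that by simp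
    then have "N * (real (Suc q) + 1) \<le> N * real (Suc r)"
      using Npos by (simp add: mult_left_mono)
    then have "N * real (Suc q) + N \<le> N * real (Suc r)" by (simp add: algebra_simps)
    then have "hh (p!q) * (N*N) < hh (p!r) * (N*N)" using a b by linarith
    then show ?thesis using Npos by simp
  qed
  define y where "y i = g (p!i)" for i
  define x where "x i = (if i < c1 then y i else if i < c2 then 1 + hh (p!i) else 4 - y i)" for i
  have pin: "(x i, y i) \<in> figM" if "i < n" for i
  proof -
    have hv: "0 < hh (p!i) \<and> hh (p!i) < 1" using hb rng[OF that] by auto
    consider "i < c1" | "c1 \<le> i \<and> i < c2 \<and> L \<le> p!i" | "c1 \<le> i \<and> i < c2 \<and> p!i < L" | "c2 \<le> i"
      by linarith
    then show ?thesis
    proof cases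
      case 1
      then have "p!i < L" using A1 by auto
      then show ?thesis using 1 hv unfolding figM_def x_def y_def g_def by auto
    next
      case 2
      then show ?thesis using hv unfolding figM_def x_def y_def g_def by auto
    next
      case 3
      then have "(x i, y i) = (1 + hh (p!i), 2 - (1 + hh (p!i)))" unfolding x_def y_def g_def by auto
      then show ?thesis using hv unfolding figM_def by auto
    next
      case 4
      then have "L \<le> p!i" using C1 that n_def by auto
      then have "(x i, y i) = (3 - hh (p!i), 4 - (3 - hh (p!i)))" using 4 c12
        unfolding x_def y_def g_def by auto
      then show ?thesis using hv unfolding figM_def by auto
    qed
  qed
  have yiff: "y i < y j \<longleftrightarrow> p!i < p!j" if "i<n" "j<n" for i j
  proof -
    have "1 \<le> p!i" "p!i \<le> n" "1 \<le> p!j" "p!j \<le> n" using rng that by auto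
    then show ?thesis unfolding y_def using gmono[of "p!i" "p!j"] gmono[of "p!j" "p!i"]
      by (metis less_irrefl linorder_neqE_nat order.asym)
  qed
  have xlt: "x i < x j" if "i<j" "j<n" for i j
  proof -
    have i: "i < n" using that by simp
    have hvi: "0 < hh (p!i) \<and> hh (p!i) < 1" using hb rng[OF i] by auto
    have hvj: "0 < hh (p!j) \<and> hh (p!j) < 1" using hb rng[OF that(2)] by auto
    have gi: "0 < g (p!i) \<and> g (p!i) < 2" using hvi unfolding g_def by auto
    have gj: "0 < g (p!j) \<and> g (p!j) < 2" using hvj unfolding g_def by auto
    consider "j < c1" | "i < c1 \<and> c1 \<le> j \<and> j < c2" | "i < c1 \<and> c2 \<le> j"
      | "c1 \<le> i \<and> j < c2" | "c1 \<le> i \<and> i < c2 \<and> c2 \<le> j" | "c2 \<le> i"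
      using that by linarith
    then show ?thesis
    proof cases
      case 1
      then have "p!i < p!j" using A2 that by auto
      then show ?thesis using 1 that yiff[of i j] i unfolding x_def by auto
    next
      case 2
      then have "g (p!i) < 1" using A1 hvi unfolding g_def by auto
      then show ?thesis using 2 hvj unfolding x_def y_def by auto
    next
      case 3
      then have "g (p!i) < 1" using A1 hvi unfolding g_def by auto
      moreover have "L \<le> p!j" using C1 3 that n_def by auto
      ultimately show ?thesis using 3 hvj c12 unfolding x_def y_def g_def by auto
    next
      case 4
      then show ?thesis using midlt[of i j] that c12 unfolding x_def by auto
    next
      case 5
      then have "L \<le> p!j" using C1 that n_def by auto
      then show ?thesis using 5 hvi hvj c12 unfolding x_def y_def g_def by auto
    next
      case 6
      then have "p!j < p!i" using C2 that n_def by auto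
      then have "y j < y i" using yiff[of j i] that i by auto
      then show ?thesis using 6 that c12 unfolding x_def by auto
    qed
  qed
  show ?thesis unfolding Geom_def
    using perm pin yiff xlt n_def by (intro CollectI conjI exI[of _ x] exI[of _ y]) auto
qed




lemma inc_chain:
  fixes f :: "nat \<Rightarrow> nat"
  assumes "\<forall>q. a \<le> q \<and> Suc q < b \<longrightarrow> f q < f (Suc q)"
  shows "a \<le> q \<Longrightarrow> q < r \<Longrightarrow> r < b \<Longrightarrow> f q < f r"
proof (induction r)
  case 0 then show ?case by simp
next
  case (Suc r)
  show ?case
  proof (cases "q = r")
    case True then show ?thesis using assms Suc.prems by auto
  next
    case False
    then have "f q < f r" using Suc by auto
    moreover have "f r < f (Suc r)" using assms Suc.prems False by auto
    ultimately show ?thesis by simp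
  qed
qed

lemma dec_chain:
  fixes f :: "nat \<Rightarrow> nat"
  assumes "\<forall>q. a \<le> q \<and> Suc q < b \<longrightarrow> f (Suc q) < f q"
  shows "a \<le> q \<Longrightarrow> q < r \<Longrightarrow> r < b \<Longrightarrow> f r < f q"
proof (induction r)
  case 0 then show ?case by simp
next
  case (Suc r)
  show ?case
  proof (cases "q = r")
    case True then show ?thesis using assms Suc.prems by auto
  next
    case False
    then have "f r < f q" using Suc by auto
    moreover have "f (Suc r) < f r" using assms Suc.prems False by auto
    ultimately show ?thesis by simp
  qed
qed

context SP begin

lemma geom: "p \<in> Geom figM"
proof -
  define Apre where "Apre c \<longleftrightarrow> c \<le> n \<and> (\<forall>q<c. p!q < L) \<and> (\<forall>q. Suc q < c \<longrightarrow> p!q < p!(Suc q))" for c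
  define Csuf where "Csuf c \<longleftrightarrow> c \<le> n \<and> (\<forall>q. c \<le> q \<and> q < n \<longrightarrow> L \<le> p!q) \<and> (\<forall>q. c \<le> q \<and> Suc q < n \<longrightarrow> p!(Suc q) < p!q)" for c
  define c1 where "c1 = (GREATEST c. Apre c)"
  define c2 where "c2 = (LEAST c. Csuf c)"
  have A0: "Apre 0" unfolding Apre_def by simp
  have Abnd: "\<forall>y. Apre y \<longrightarrow> y \<le> n" unfolding Apre_def by simp
  have Ac1: "Apre c1" unfolding c1_def by (rule GreatestI_nat[of Apre 0 n]) (use A0 Abnd in auto)
  have Amax: "Apre c \<Longrightarrow> c \<le> c1" for c unfolding c1_def
    by (rule Greatest_le_nat[of Apre c n]) (use Abnd in auto)
  have Cn1: "Csuf (n-1)" unfolding Csuf_def using npos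
    by (auto simp: le_eq_less_or_eq)
  have Cc2: "Csuf c2" unfolding c2_def using Cn1 by (rule LeastI)
  have Cmin: "c < c2 \<Longrightarrow> \<not> Csuf c" for c unfolding c2_def by (rule not_less_Least)
  have c2n: "c2 \<le> n - 1" unfolding c2_def using Cn1 by (rule Least_le)
  have c1n: "c1 \<le> n" using Ac1 Apre_def by simp
  have c12: "c1 \<le> c2"
  proof (rule ccontr)
    assume "\<not> c1 \<le> c2"
    then have "c2 < c1" by simp
    then have "p!c2 < L" using Ac1 unfolding Apre_def by auto
    moreover have "L \<le> p!c2" using Cc2 c2n unfolding Csuf_def by auto
    ultimately show False by simp
  qed
  have A1: "\<forall>q<c1. p!q < L" using Ac1 unfolding Apre_def by auto
  have A2: "\<forall>q r. q<r \<and> r<c1 \<longrightarrow> p!q < p!r"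
  proof (intro allI impI)
    fix q r assume "q<r \<and> r<c1"
    then show "p!q < p!r"
      using inc_chain[of 0 c1 "\<lambda>k. p!k" q r] Ac1 unfolding Apre_def by auto
  qed
  have C1: "\<forall>q. c2 \<le> q \<and> q<n \<longrightarrow> L \<le> p!q" using Cc2 unfolding Csuf_def by auto
  have C2: "\<forall>q r. c2 \<le> q \<and> q<r \<and> r<n \<longrightarrow> p!r < p!q"
  proof (intro allI impI)
    fix q r assume "c2 \<le> q \<and> q<r \<and> r<n"
    then show "p!r < p!q"
      using dec_chain[of c2 n "\<lambda>k. p!k" q r] Cc2 unfolding Csuf_def by auto
  qed
  have M1: "\<forall>q r. c1 \<le> q \<and> q<r \<and> r<c2 \<and> L \<le> p!q \<and> L \<le> p!r \<longrightarrow> p!q < p!r"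
  proof (intro allI impI)
    fix q r assume qr: "c1 \<le> q \<and> q<r \<and> r<c2 \<and> L \<le> p!q \<and> L \<le> p!r"
    show "p!q < p!r"
    proof (rule ccontr)
      assume "\<not> p!q < p!r"
      moreover have "p!q \<noteq> p!r" using dist[of q r] qr c2n by auto
      ultimately have rq: "p!r < p!q" by auto
      have rn: "r < n-1" using qr c2n by auto
      have "p!r \<noteq> L" using dist[of r "n-1"] rn by auto
      then have rL: "L < p!r" using qr by linarith
      have "\<not> Csuf r" using Cmin qr by auto
      then have "\<not> (\<forall>q. r \<le> q \<and> q < n \<longrightarrow> L \<le> p!q) \<or> \<not> (\<forall>q. r \<le> q \<and> Suc q < n \<longrightarrow> p!(Suc q) < p!q)"
        unfolding Csuf_def using rn by auto
      then have "(\<exists>t. r \<le> t \<and> t < n \<and> p!t < L) \<or> (\<exists>u. r \<le> u \<and> Suc u < n \<and> \<not> p!(Suc u) < p!u)"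
        by (auto simp: not_le)
      then show False
      proof
        assume "\<exists>t. r \<le> t \<and> t < n \<and> p!t < L"
        then obtain t where t: "r \<le> t" "t < n" "p!t < L" by blast
        have "t \<noteq> r" using t rL by auto
        moreover have "t \<noteq> n-1" using t by auto
        ultimately have "t < n-1" using t by linarith
        moreover have "r < t" using t \<open>t \<noteq> r\<close> by simp
        ultimately show False using noP3[of q r t] qr t rL rq by auto
      next
        assume "\<exists>u. r \<le> u \<and> Suc u < n \<and> \<not> p!(Suc u) < p!u"
        then obtain u where u: "r \<le> u" "Suc u < n" "\<not> p!(Suc u) < p!u" by blast
        have "p!(Suc u) \<noteq> p!u" using dist[of "Suc u" u] u by auto
        then have uu: "p!u < p!(Suc u)" using u by auto
        show False
        proof (cases "p!u < L")
          case True
          have "u \<noteq> r" using True rL by auto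
          then have "r < u" "u < n-1" using u by auto
          then show False using noP3[of q r u] qr rL rq True by auto
        next
          case False
          have "p!u \<noteq> L" using dist[of u "n-1"] u by auto
          then have uL: "L < p!u" using False by auto
          define m where "m = (if p!u \<le> p!r then u else r)"
          have m1: "p!m < p!q" "p!m < p!(Suc u)" "L < p!m" "q < m" "m \<le> u"
            unfolding m_def using rq uu uL rL qr u by auto
          have "p!(Suc u) \<noteq> L" using m1 by auto
          then have "Suc u \<noteq> n-1" by auto
          then have su: "Suc u < n-1" using u by linarith
          have "p!(Suc u) \<noteq> p!q" using dist[of "Suc u" q] u m1 by auto
          then consider "p!q < p!(Suc u)" | "p!(Suc u) < p!q" by linarith
          then show False
          proof cases
            case 1 then show False using noP4[of q m "Suc u"] m1 su by auto
          next
            case 2 then show False using no4231[of q m "Suc u" "n-1"] m1 su by (auto; arith)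
          qed
        qed
      qed
    qed
  qed
  have M2: "\<forall>q r. c1 \<le> q \<and> q<r \<and> r<c2 \<and> p!q < L \<and> p!r < L \<longrightarrow> p!r < p!q"
  proof (intro allI impI)
    fix q r assume qr: "c1 \<le> q \<and> q<r \<and> r<c2 \<and> p!q < L \<and> p!r < L"
    show "p!r < p!q"
    proof (rule ccontr)
      assume "\<not> p!r < p!q"
      moreover have "p!q \<noteq> p!r" using dist[of q r] qr c2n by auto
      ultimately have rq: "p!q < p!r" by auto
      have rn: "r < n-1" using qr c2n by auto
      have "\<not> Apre (Suc q)" using Amax[of "Suc q"] qr by auto
      moreover have "Suc q \<le> n" using qr rn by linarith
      ultimately have "\<not> (\<forall>t<Suc q. p!t < L) \<or> \<not> (\<forall>u. Suc u < Suc q \<longrightarrow> p!u < p!(Suc u))"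
        unfolding Apre_def by blast
      then have "(\<exists>t<Suc q. \<not> p!t < L) \<or> (\<exists>u. Suc u < Suc q \<and> \<not> p!u < p!(Suc u))"
        by blast
      then show False
      proof
        assume "\<exists>t<Suc q. \<not> p!t < L"
        then obtain t where t: "t < Suc q" "\<not> p!t < L" by blast
        have "t \<noteq> q" using t qr by auto
        then have tq: "t < q" using t by auto
        have "p!t \<noteq> L" using dist[of t "n-1"] tq rn qr by auto
        then have "L < p!t" using t by auto
        then show False using noP1[of t q r] tq qr rn rq by auto
      next
        assume "\<exists>u. Suc u < Suc q \<and> \<not> p!u < p!(Suc u)"
        then obtain u where u: "u < q" "\<not> p!u < p!(Suc u)" by auto
        have "p!(Suc u) \<noteq> p!u" using dist[of "Suc u" u] u qr rn by auto
        then have uu: "p!(Suc u) < p!u" using u by auto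
        show False
        proof (cases "p!u < L")
          case False
          have "p!u \<noteq> L" using dist[of u "n-1"] u qr rn by auto
          then have "L < p!u" using False by auto
          then show False using noP1[of u q r] u qr rn rq by auto
        next
          case True
          define m where "m = (if p!(Suc u) < p!q then Suc u else q)"
          have m1: "p!m < p!u" "p!m < p!r" "u < m" "m \<le> q"
            unfolding m_def using uu rq u by auto
          have "p!u \<noteq> p!r" using dist[of u r] u qr rn by auto
          then consider "p!u < p!r" | "p!r < p!u" by linarith
          then show False
          proof cases
            case 1 then show False using noP2[of u m r] m1 qr rn by auto
          next
            case 2 then show False using no3124[of u m r "n-1"] m1 qr rn True by (auto; arith)
          qed
        qed
      qed
    qed
  qed
  have c2n': "c2 \<le> n" using c2n by simp
  show ?thesis by (rule construct[OF perm c12 c2n' A1 A2 C1 C2 M1 M2])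
qed

end



lemma figM_iff: "(a,b) \<in> figM \<longleftrightarrow> (b = a \<and> 0 \<le> a \<and> a \<le> 2) \<or> (b = 2 - a \<and> 1 \<le> a \<and> a \<le> 2) \<or> (b = 4 - a \<and> 2 \<le> a \<and> a \<le> 3)"
  unfolding figM_def by auto

lemma geo4231:
  assumes "(x1,y1) \<in> figM" "(x2,y2) \<in> figM" "(x3,y3) \<in> figM" "(x4,y4) \<in> figM"
    "x1 < x2" "x2 < x3" "x3 < x4" "y4 < y2" "y2 < y3" "y3 < y1"
  shows False
  using assms unfolding figM_iff by (elim disjE conjE; linarith)

lemma geo3124:
  assumes "(x1,y1) \<in> figM" "(x2,y2) \<in> figM" "(x3,y3) \<in> figM" "(x4,y4) \<in> figM"
    "x1 < x2" "x2 < x3" "x3 < x4" "y2 < y3" "y3 < y1" "y1 < y4"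
  shows False
  using assms unfolding figM_iff by (elim disjE conjE; linarith)

lemma len4: "length xs = 4 \<Longrightarrow> \<exists>a b c d. xs = [a,b,c,d]"
  by (auto simp: length_Suc_conv numeral_eq_Suc)

lemma geom_avoids:
  assumes "p \<in> Geom figM"
  shows "avoids p [4,2,3,1] \<and> avoids p [3,1,2,4]"
proof -
  obtain x y where pts: "\<forall>i<length p. (x i, y i) \<in> figM"
    and xs: "\<forall>i<length p. \<forall>j<length p. i < j \<longrightarrow> x i < x j"
    and ys: "\<forall>i<length p. \<forall>j<length p. y i < y j \<longleftrightarrow> p ! i < p ! j"
    using assms unfolding Geom_def by blast
  have "\<not> contains p s" if s: "s = [4,2,3,1] \<or> s = [3,1,2,4]" for s
  proof
    assume "contains p s"
    then obtain idx where idx: "length idx = length s" "sorted_wrt (<) idx"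
      "\<forall>k\<in>set idx. k < length p" "order_iso (map (\<lambda>k. p ! k) idx) s"
      unfolding contains_def by blast
    have "length idx = 4" using idx s by auto
    then obtain a b c d where abcd: "idx = [a,b,c,d]" using len4 by blast
    have ord: "a<b" "b<c" "c<d" using idx(2) abcd by auto
    have rng: "a < length p" "b < length p" "c < length p" "d < length p" using idx(3) abcd by auto
    have oi: "\<forall>i<Suc (Suc (Suc (Suc 0))). \<forall>j<Suc (Suc (Suc (Suc 0))).
       ([p!a,p!b,p!c,p!d] ! i < [p!a,p!b,p!c,p!d] ! j) = (s ! i < s ! j)"
      using idx(4) abcd s unfolding order_iso_def by auto
    have xo: "x a < x b" "x b < x c" "x c < x d" using xs ord rng by auto
    from s show False
    proof
      assume s1: "s = [4,2,3,1]"
      have "p!d < p!b" "p!b < p!c" "p!c < p!a" using oi s1 by (simp_all add: all4s)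
      then have "y d < y b" "y b < y c" "y c < y a" using ys rng by auto
      then show False using geo4231[of "x a" "y a" "x b" "y b" "x c" "y c" "x d" "y d"] pts rng xo by auto
    next
      assume s2: "s = [3,1,2,4]"
      have "p!b < p!c" "p!c < p!a" "p!a < p!d" using oi s2 by (simp_all add: all4s)
      then have "y b < y c" "y c < y a" "y a < y d" using ys rng by auto
      then show False using geo3124[of "x a" "y a" "x b" "y b" "x c" "y c" "x d" "y d"] pts rng xo by auto
    qed
  qed
  then show ?thesis unfolding avoids_def by auto
qed


theorem proposition5p1:
  fixes p :: "nat list"
  assumes "is_perm p"
  shows "(simple_perm p \<and> avoids p [4,2,3,1] \<and> avoids p [3,1,2,4])
           \<longleftrightarrow> (simple_perm p \<and> p \<in> Geom figM)"
proof
  assume h: "simple_perm p \<and> avoids p [4,2,3,1] \<and> avoids p [3,1,2,4]"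
  show "simple_perm p \<and> p \<in> Geom figM"
  proof (cases "p = []")
    case True then show ?thesis using h assms unfolding Geom_def by auto
  next
    case False
    interpret SP p using assms h False by unfold_locales auto
    show ?thesis using h geom by auto
  qed
next
  assume "simple_perm p \<and> p \<in> Geom figM"
  then show "simple_perm p \<and> avoids p [4,2,3,1] \<and> avoids p [3,1,2,4]"
    using geom_avoids by auto
qed

end
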